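(* Let $n\in\mathbb{N}=\{1,2,\dots\}$, $0\le i\le n-1$, and $\alpha,\beta\in\mathbb{R}$ such that the Jacobi functions below are defined. Then on $(-1,1)$ $$\int\frac{t^i}{i!}p_n^{(\alpha,\beta)}(t)\,dt=-\sum_{k=0}^i\frac{2^{k+1}\Gamma(n+\alpha+\beta+1)}{\Gamma(n+k+\alpha+\beta+2)}\frac{t^{i-k}}{(i-k)!}p_{n-1-k}^{(\alpha+1+k,\beta+1+k)}(t),$$ i.e. the right-hand side is an antiderivative of $t\mapsto\frac{t^i}{i!}p_n^{(\alpha,\beta)}(t)$.
   Context: The Jacobi polynomials are $P_n^{(\alpha,\beta)}(t)=\sum_{j=0}^n\frac{1}{2^n}\binom{n+\alpha}{n-j}\binom{n+\beta}{j}(t-1)^j(t+1)^{n-j}$. The Jacobi functions on $(-1,1)$ are $$p_n^{(\alpha,\beta)}(t)=\frac{(2n+\alpha+\beta+1)\Gamma(n+\alpha+\beta+1)\,n!}{2^{\alpha+\beta+1}\Gamma(n+\alpha+1)\Gamma(n+\beta+1)}(1-t)^{\alpha}(1+t)^{\beta}P_n^{(\alpha,\beta)}(t)=\frac{(-1)^n(2n+\alpha+\beta+1)\Gamma(n+\alpha+\beta+1)}{2^{n+\alpha+\beta+1}\Gamma(n+\alpha+1)\Gamma(n+\beta+1)}\frac{d^n}{dt^n}\big((1-t)^{n+\alpha}(1+t)^{n+\beta}\big).$$ *)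

theory Defs
  imports "HOL-Analysis.Analysis"
begin

definition jacobiP :: "nat \<Rightarrow> real \<Rightarrow> real \<Rightarrow> real \<Rightarrow> real" where
  "jacobiP n a b t = (\<Sum>j=0..n. (1 / 2^n) * ((real n + a) gchoose (n - j)) * ((real n + b) gchoose j)
       * (t - 1)^j * (t + 1)^(n - j))"

definition jacobi_fun :: "nat \<Rightarrow> real \<Rightarrow> real \<Rightarrow> real \<Rightarrow> real" where
  "jacobi_fun n a b t =
     (2 * real n + a + b + 1) * Gamma (real n + a + b + 1) * fact n
       / (2 powr (a + b + 1) * Gamma (real n + a + 1) * Gamma (real n + b + 1))
     * (1 - t) powr a * (1 + t) powr b * jacobiP n a b t"

end

theory Submission
  imports Defs
begin

definition gg :: "real \<Rightarrow> real \<Rightarrow> real \<Rightarrow> real" where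
  "gg p q t = (1 - t) powr p * (1 + t) powr q"

lemma gg_deriv:
  assumes "t \<in> {-1<..<1}"
  shows "((\<lambda>s. gg p q s) has_real_derivative (- p * gg (p - 1) q t + q * gg p (q - 1) t)) (at t)"
proof -
  have t1: "1 - t > 0" "1 + t > 0" using assms by auto
  have d1: "((\<lambda>s. (1 - s) powr p) has_real_derivative (p * (1 - t) powr (p - 1) * (-1))) (at t)"
    by (rule DERIV_chain2[where f="\<lambda>z. z powr p" and g="\<lambda>s. 1 - s", OF has_real_derivative_powr[OF t1(1)]]) (auto intro!: derivative_eq_intros)
  have d2: "((\<lambda>s. (1 + s) powr q) has_real_derivative (q * (1 + t) powr (q - 1) * 1)) (at t)"
    by (rule DERIV_chain2[where f="\<lambda>z. z powr q" and g="\<lambda>s. 1 + s", OF has_real_derivative_powr[OF t1(2)]]) (auto intro!: derivative_eq_intros)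
  show ?thesis unfolding gg_def
    by (rule DERIV_cong[OF DERIV_mult[OF d1 d2]]) (simp add: algebra_simps)
qed

definition WW :: "nat \<Rightarrow> real \<Rightarrow> real \<Rightarrow> real \<Rightarrow> real" where
  "WW m a b t = (\<Sum>j=0..m. ((real m + a) gchoose (m - j)) * ((real m + b) gchoose j) * (-1)^j
      * gg (a + real j) (b + real m - real j) t)"

lemma jacobi_fun_WW:
  assumes "t \<in> {-1<..<1}"
  shows "jacobi_fun m a b t =
     (2 * real m + a + b + 1) * Gamma (real m + a + b + 1) * fact m
       / (2 powr (a + b + 1) * Gamma (real m + a + 1) * Gamma (real m + b + 1)) / 2^m * WW m a b t"
proof -
  have t1: "1 - t > 0" "1 + t > 0" using assms by auto
  have "(1 - t) powr a * (1 + t) powr b * jacobiP m a b t = WW m a b t / 2^m"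
    unfolding jacobiP_def WW_def sum_distrib_left sum_divide_distrib
  proof (rule sum.cong[OF refl])
    fix j assume j: "j \<in> {0..m}"
    have e1: "(t - 1)^j = (-1)^j * (1 - t)^j" by (simp add: power_mult_distrib[symmetric])
    have e2: "(1 - t) powr a * (1 - t)^j = (1 - t) powr (a + real j)"
      using t1 by (simp add: powr_add powr_realpow)
    have e3: "(1 + t) powr b * (1 + t)^(m - j) = (1 + t) powr (b + real m - real j)"
      proof -
      have "b + real m - real j = b + real (m - j)" using j by (simp add: of_nat_diff)
      then show ?thesis using t1 by (simp only: powr_add powr_realpow[symmetric])
    qed
    show "(1 - t) powr a * (1 + t) powr b * (1 / 2 ^ m * ((real m + a) gchoose (m - j)) * ((real m + b) gchoose j) *
          (t - 1) ^ j * (t + 1) ^ (m - j)) =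
         ((real m + a) gchoose (m - j)) * ((real m + b) gchoose j) * (- 1) ^ j * gg (a + real j) (b + real m - real j) t / 2 ^ m"
      unfolding gg_def e1 e2[symmetric] e3[symmetric] by (simp add: algebra_simps)
  qed
  moreover have "jacobi_fun m a b t = (2 * real m + a + b + 1) * Gamma (real m + a + b + 1) * fact m
       / (2 powr (a + b + 1) * Gamma (real m + a + 1) * Gamma (real m + b + 1)) *
      ((1 - t) powr a * (1 + t) powr b * jacobiP m a b t)"
    unfolding jacobi_fun_def by (simp only: mult.assoc)
  ultimately show ?thesis by simp
qed

lemma gb: "(r - of_nat k) * (r gchoose k) = of_nat (Suc k) * (r gchoose Suc k)" for r :: real
  using gbinomial_mult_1[of r k] by (simp add: algebra_simps)

lemma coeff_id:
  fixes a b :: real and m j :: nat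
  defines "R \<equiv> real m + (a + 1)" and "S \<equiv> real m + (b + 1)"
  defines "x \<equiv> \<lambda>j. (R gchoose (m - j)) * (S gchoose j) * (a + 1 + real j)"
  defines "y \<equiv> \<lambda>j. (R gchoose (m - j)) * (S gchoose j) * (b + 1 + real m - real j)"
  assumes "j \<le> Suc m"
  shows "(real m + 1) * ((real (Suc m) + a) gchoose (Suc m - j)) * ((real (Suc m) + b) gchoose j)
     = (if j \<le> m then x j else 0) + (if j = 0 then 0 else y (j - 1))"
proof -
  have RS: "real (Suc m) + a = R" "real (Suc m) + b = S" unfolding R_def S_def by simp_all
  show ?thesis
  proof (cases "j = 0")
    case True
    have "(R - real m) * (R gchoose m) = real (Suc m) * (R gchoose Suc m)" by (rule gb)
    then show ?thesis using True unfolding RS x_def by (simp add: R_def algebra_simps)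
  next
    case False
    then obtain l where l: "j = Suc l" by (cases j) auto
    show ?thesis
    proof (cases "j = Suc m")
      case True
      have "(S - real m) * (S gchoose m) = real (Suc m) * (S gchoose Suc m)" by (rule gb)
      then show ?thesis using True unfolding RS y_def by (simp add: S_def algebra_simps)
    next
      case False
      with assms l have lm: "l < m" by auto
      have h1: "(R - real (m - Suc l)) * (R gchoose (m - Suc l)) = real (Suc (m - Suc l)) * (R gchoose Suc (m - Suc l))"
        by (rule gb)
      have h2: "(S - real l) * (S gchoose l) = real (Suc l) * (S gchoose Suc l)" by (rule gb)
      have e1: "Suc (m - Suc l) = m - l" using lm by simp
      have e2: "R - real (m - Suc l) = a + 1 + real (Suc l)" using lm by (simp add: R_def of_nat_diff)
      have e3: "S - real l = b + 1 + real m - real l" by (simp add: S_def)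
      have hx: "(R gchoose (m - Suc l)) * (a + 1 + real (Suc l)) = real (m - l) * (R gchoose (m - l))"
        using h1 unfolding e1 e2 by (simp add: mult.commute)
      have hy: "(S gchoose l) * (b + 1 + real m - real l) = real (Suc l) * (S gchoose Suc l)"
        using h2 unfolding e3 by (simp add: mult.commute)
      have "x j + y l = ((R gchoose (m - Suc l)) * (a + 1 + real (Suc l))) * (S gchoose Suc l)
            + (R gchoose (m - l)) * ((S gchoose l) * (b + 1 + real m - real l))"
        unfolding x_def y_def l by (simp only: mult_ac)
      also have "\<dots> = (R gchoose (m - l)) * (S gchoose Suc l) * (real (m - l) + real (Suc l))"
        unfolding hx hy by (simp only: algebra_simps)
      finally have "x j + y l = (R gchoose (m - l)) * (S gchoose Suc l) * (real (m - l) + real (Suc l))" .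
      then show ?thesis using lm l unfolding RS by (simp add: of_nat_diff algebra_simps)
    qed
  qed
qed


lemma WW_deriv:
  assumes t: "t \<in> {-1<..<1}"
  shows "((\<lambda>s. WW m (a + 1) (b + 1) s) has_real_derivative (- (real m + 1) * WW (Suc m) a b t)) (at t)"
proof -
  define R where "R = real m + (a + 1)"
  define S where "S = real m + (b + 1)"
  define x where "x = (\<lambda>j. (R gchoose (m - j)) * (S gchoose j) * (a + 1 + real j))"
  define y where "y = (\<lambda>j. (R gchoose (m - j)) * (S gchoose j) * (b + 1 + real m - real j))"
  define G where "G = (\<lambda>j::nat. gg (a + real j) (b + real m + 1 - real j) t)"
  have "((\<lambda>s. WW m (a + 1) (b + 1) s) has_real_derivative
     (\<Sum>j=0..m. (R gchoose (m - j)) * (S gchoose j) * (-1)^j *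
       (- (a + 1 + real j) * gg (a + 1 + real j - 1) (b + 1 + real m - real j) t
        + (b + 1 + real m - real j) * gg (a + 1 + real j) (b + 1 + real m - real j - 1) t))) (at t)"
    unfolding WW_def R_def S_def
    by (intro DERIV_sum DERIV_cmult gg_deriv[OF t])
  moreover have "(\<Sum>j=0..m. (R gchoose (m - j)) * (S gchoose j) * (-1)^j *
       (- (a + 1 + real j) * gg (a + 1 + real j - 1) (b + 1 + real m - real j) t
        + (b + 1 + real m - real j) * gg (a + 1 + real j) (b + 1 + real m - real j - 1) t))
     = (\<Sum>j=0..m. (-1)^j * (- x j * G j + y j * G (Suc j)))"
  proof (rule sum.cong[OF refl])
    fix j assume "j \<in> {0..m}"
    have g1: "gg (a + 1 + real j - 1) (b + 1 + real m - real j) t = G j"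
      unfolding G_def by (rule arg_cong2[where f="\<lambda>p q. gg p q t"]) (simp_all add: algebra_simps)
    have g2: "gg (a + 1 + real j) (b + 1 + real m - real j - 1) t = G (Suc j)"
      unfolding G_def by (rule arg_cong2[where f="\<lambda>p q. gg p q t"]) (simp_all add: algebra_simps)
    show "(R gchoose (m - j)) * (S gchoose j) * (-1)^j *
       (- (a + 1 + real j) * gg (a + 1 + real j - 1) (b + 1 + real m - real j) t
        + (b + 1 + real m - real j) * gg (a + 1 + real j) (b + 1 + real m - real j - 1) t)
       = (-1)^j * (- x j * G j + y j * G (Suc j))"
      unfolding g1 g2 x_def y_def by (simp add: algebra_simps)
  qed
  moreover have "- (real m + 1) * WW (Suc m) a b t = (\<Sum>j=0..m. (-1)^j * (- x j * G j + y j * G (Suc j)))"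
  proof -
    have "(real m + 1) * WW (Suc m) a b t =
        (\<Sum>j=0..Suc m. ((if j \<le> m then x j else 0) + (if j = 0 then 0 else y (j - 1))) * (-1)^j * G j)"
      unfolding WW_def sum_distrib_left
    proof (rule sum.cong[OF refl])
      fix j assume j: "j \<in> {0..Suc m}"
      have gq: "gg (a + real j) (b + real (Suc m) - real j) t = G j"
        unfolding G_def by (rule arg_cong2[where f="\<lambda>p q. gg p q t"]) (simp_all add: algebra_simps)
      have c: "(real m + 1) * ((real (Suc m) + a) gchoose (Suc m - j)) * ((real (Suc m) + b) gchoose j)
         = (if j \<le> m then x j else 0) + (if j = 0 then 0 else y (j - 1))"
        unfolding x_def y_def R_def S_def by (rule coeff_id) (use j in auto)
      show "(real m + 1) * (((real (Suc m) + a) gchoose (Suc m - j)) * ((real (Suc m) + b) gchoose j) * (-1)^j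
           * gg (a + real j) (b + real (Suc m) - real j) t)
          = ((if j \<le> m then x j else 0) + (if j = 0 then 0 else y (j - 1))) * (-1)^j * G j"
        unfolding gq c[symmetric] by (simp only: mult_ac)
    qed
    also have "\<dots> = (\<Sum>j=0..Suc m. (if j \<le> m then x j else 0) * (-1)^j * G j)
                   + (\<Sum>j=0..Suc m. (if j = 0 then 0 else y (j - 1)) * (-1)^j * G j)"
      by (simp add: sum.distrib[symmetric] algebra_simps)
    also have "(\<Sum>j=0..Suc m. (if j \<le> m then x j else 0) * (-1)^j * G j) = (\<Sum>j=0..m. x j * (-1)^j * G j)"
      by (simp add: sum.atLeast0_atMost_Suc)
    also have "(\<Sum>j=0..Suc m. (if j = 0 then 0 else y (j - 1)) * (-1)^j * G j) = (\<Sum>j=0..m. y j * (-1)^(Suc j) * G (Suc j))"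
      by (subst sum.atLeast0_atMost_Suc_shift) simp
    finally have "(real m + 1) * WW (Suc m) a b t = (\<Sum>j=0..m. x j * (-1)^j * G j) + (\<Sum>j=0..m. y j * (-1)^(Suc j) * G (Suc j))" .
    moreover have "(\<Sum>j=0..m. (-1)^j * (- x j * G j + y j * G (Suc j))) = - ((\<Sum>j=0..m. x j * (-1)^j * G j) + (\<Sum>j=0..m. y j * (-1)^(Suc j) * G (Suc j)))"
      by (simp add: sum.distrib[symmetric] sum_negf[symmetric] algebra_simps)
    ultimately show ?thesis by (simp add: algebra_simps)
  qed
  ultimately show ?thesis by simp
qed


lemma jac_deriv:
  assumes t: "t \<in> {-1<..<1}" and nz: "real m + a + b \<notin> \<int>\<^sub>\<le>\<^sub>0"
  shows "((\<lambda>s. jacobi_fun m a b s) has_real_derivative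
           (- ((real m + a + b) / 2) * jacobi_fun (Suc m) (a - 1) (b - 1) t)) (at t)"
proof -
  define a0 where "a0 = a - 1"
  define b0 where "b0 = b - 1"
  have ab: "a = a0 + 1" "b = b0 + 1" unfolding a0_def b0_def by simp_all
  define c1 where "c1 = (2 * real m + a + b + 1) * Gamma (real m + a + b + 1) * fact m
       / (2 powr (a + b + 1) * Gamma (real m + a + 1) * Gamma (real m + b + 1)) / 2^m"
  define c2 where "c2 = (2 * real (Suc m) + (a - 1) + (b - 1) + 1) * Gamma (real (Suc m) + (a - 1) + (b - 1) + 1) * fact (Suc m)
       / (2 powr ((a - 1) + (b - 1) + 1) * Gamma (real (Suc m) + (a - 1) + 1) * Gamma (real (Suc m) + (b - 1) + 1)) / 2^(Suc m)"
  have cc: "c1 * (- (real m + 1)) = - ((real m + a + b) / 2) * c2"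
  proof -
    define D where "D = Gamma (real m + a + 1) * Gamma (real m + b + 1)"
    define P where "P = 2 powr (a + b - 1)"
    have P: "P > 0" unfolding P_def by simp
    have g: "Gamma (real m + a + b + 1) = (real m + a + b) * Gamma (real m + a + b)"
      using Gamma_plus1[OF nz] by simp
    have p: "2 powr (a + b + 1) = 4 * P" unfolding P_def
      using powr_add[of 2 "a + b - 1" 2] by (simp add: algebra_simps)
    have e1: "c1 = (2 * real m + a + b + 1) * ((real m + a + b) * Gamma (real m + a + b)) * fact m / (4 * P * D) / 2^m"
      unfolding c1_def D_def g p by (simp add: mult.assoc)
    have e2: "c2 = (2 * real m + a + b + 1) * Gamma (real m + a + b) * ((real m + 1) * fact m) / (P * D) / (2 * 2^m)"
      unfolding c2_def D_def P_def by (simp add: algebra_simps)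
    show ?thesis
    proof (cases "D = 0")
      case True then show ?thesis unfolding e1 e2 by simp
    next
      case False
      then show ?thesis unfolding e1 e2 using P by (simp add: field_simps)
    qed
  qed
  have "((\<lambda>s. c1 * WW m (a0 + 1) (b0 + 1) s) has_real_derivative (c1 * (- (real m + 1) * WW (Suc m) a0 b0 t))) (at t)"
    by (intro DERIV_cmult WW_deriv[OF t])
  then have "((\<lambda>s. jacobi_fun m a b s) has_real_derivative (c1 * (- (real m + 1) * WW (Suc m) a0 b0 t))) (at t)"
  proof (rule has_field_derivative_transform_within_open[where S="{-1<..<1}"])
    show "open {-1<..<1::real}" by simp
    show "t \<in> {-1<..<1}" by (rule t)
    fix s :: real assume "s \<in> {-1<..<1}"
    then show "c1 * WW m (a0 + 1) (b0 + 1) s = jacobi_fun m a b s"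
      unfolding jacobi_fun_WW[OF \<open>s \<in> _\<close>, of m a b] c1_def ab(1)[symmetric] ab(2)[symmetric] by simp
  qed
  moreover have "jacobi_fun (Suc m) (a - 1) (b - 1) t = c2 * WW (Suc m) a0 b0 t"
    unfolding jacobi_fun_WW[OF t] c2_def a0_def b0_def by simp
  ultimately show ?thesis using cc
    by (metis (no_types, lifting) mult.assoc mult_minus_left)
qed


theorem lemma4p4:
  fixes n i :: nat and \<alpha> \<beta> :: real
  assumes "1 \<le> n" and "i \<le> n - 1"
    and "real n + \<alpha> + 1 \<notin> \<int>\<^sub>\<le>\<^sub>0"
    and "real n + \<beta> + 1 \<notin> \<int>\<^sub>\<le>\<^sub>0"
    and "real n + \<alpha> + \<beta> + 1 \<notin> \<int>\<^sub>\<le>\<^sub>0"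
    and "\<And>k. k \<le> i \<Longrightarrow> real n + real k + \<alpha> + \<beta> + 2 \<notin> \<int>\<^sub>\<le>\<^sub>0"
  shows "\<forall>t\<in>{-1<..<1::real}.
    ((\<lambda>s. - (\<Sum>k=0..i. 2^(k+1) * Gamma (real n + \<alpha> + \<beta> + 1) / Gamma (real n + real k + \<alpha> + \<beta> + 2)
              * s^(i - k) / fact (i - k)
              * jacobi_fun (n - 1 - k) (\<alpha> + 1 + real k) (\<beta> + 1 + real k) s))
      has_real_derivative (t^i / fact i * jacobi_fun n \<alpha> \<beta> t)) (at t)"
proof
  fix t :: real assume t: "t \<in> {-1<..<1}"
  define G1 where "G1 = Gamma (real n + \<alpha> + \<beta> + 1)"
  define d where "d = (\<lambda>k::nat. 2^(k+1) * G1 / Gamma (real n + real k + \<alpha> + \<beta> + 2))"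
  define DD where "DD = (\<lambda>k::nat. 2^k * G1 / Gamma (real n + real k + \<alpha> + \<beta> + 1))"
  define J where "J = (\<lambda>k::nat. \<lambda>s. jacobi_fun (n - 1 - k) (\<alpha> + 1 + real k) (\<beta> + 1 + real k) s)"
  define P where "P = (\<lambda>k::nat. DD k * t^(i - k) / fact (i - k) * jacobi_fun (n - k) (\<alpha> + real k) (\<beta> + real k) t)"
  have nzk: "real n + real k + \<alpha> + \<beta> + 1 \<notin> \<int>\<^sub>\<le>\<^sub>0" if "k \<le> i" for k
  proof (cases k)
    case 0 then show ?thesis using assms(5) by simp
  next
    case (Suc l)
    then have "l \<le> i" using that by simp
    from assms(6)[OF this] show ?thesis using Suc by (simp add: algebra_simps)
  qed
  have summand: "((\<lambda>s. d k * s^(i - k) / fact (i - k) * J k s) has_real_derivative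
        ((if k < i then P (Suc k) else 0) - P k)) (at t)" if k: "k \<le> i" for k
  proof -
    define z where "z = real n + real k + \<alpha> + \<beta> + 1"
    have z: "z \<notin> \<int>\<^sub>\<le>\<^sub>0" using nzk[OF k] unfolding z_def .
    have z0: "z \<noteq> 0" using z by auto
    have kn: "k \<le> n - 1" using k assms(2) by simp
    have mab: "real (n - 1 - k) + (\<alpha> + 1 + real k) + (\<beta> + 1 + real k) = z"
      using kn assms(1) unfolding z_def by (simp add: of_nat_diff algebra_simps)
    have jd0: "(J k has_real_derivative (- (z / 2) * jacobi_fun (Suc (n - 1 - k)) (\<alpha> + 1 + real k - 1) (\<beta> + 1 + real k - 1) t)) (at t)"
      unfolding J_def using jac_deriv[OF t, of "n - 1 - k" "\<alpha> + 1 + real k" "\<beta> + 1 + real k"] mab z by simp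
    have "Suc (n - 1 - k) = n - k" using kn assms(1) by simp
    then have jd: "(J k has_real_derivative (- (z / 2) * jacobi_fun (n - k) (\<alpha> + real k) (\<beta> + real k) t)) (at t)"
      using jd0 by simp
    have pd: "((\<lambda>s. d k * s^(i - k) / fact (i - k)) has_real_derivative
               (d k * (real (i - k) * t^(i - k - 1)) / fact (i - k))) (at t)"
      by (auto intro!: derivative_eq_intros)
    have D: "((\<lambda>s. d k * s^(i - k) / fact (i - k) * J k s) has_real_derivative
        (d k * (real (i - k) * t^(i - k - 1)) / fact (i - k) * J k t
         + d k * t^(i - k) / fact (i - k) * (- (z / 2) * jacobi_fun (n - k) (\<alpha> + real k) (\<beta> + real k) t))) (at t)"
      by (rule DERIV_cong[OF DERIV_mult[OF pd jd]]) (simp add: algebra_simps)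
    have A: "d k * (z / 2) = DD k"
    proof -
      have "Gamma (real n + real k + \<alpha> + \<beta> + 2) = z * Gamma z"
        using Gamma_plus1[OF z] unfolding z_def by (simp add: algebra_simps)
      then show ?thesis unfolding d_def DD_def z_def[symmetric] using z0
        by (simp add: field_simps)
    qed
    have B: "d k * (real (i - k) * t^(i - k - 1)) / fact (i - k) * J k t = (if k < i then P (Suc k) else 0)"
    proof (cases "k < i")
      case True
      have f: "fact (i - k) = real (i - k) * fact (i - Suc k)"
        using True by (metis Suc_diff_Suc fact_Suc of_nat_fact)
      have ik: "real (i - k) \<noteq> 0" using True by simp
      have dd: "DD (Suc k) = d k" unfolding DD_def d_def by (simp add: algebra_simps)
      have jj: "J k t = jacobi_fun (n - Suc k) (\<alpha> + real (Suc k)) (\<beta> + real (Suc k)) t"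
        unfolding J_def by (simp add: algebra_simps)
      have ee: "i - k - 1 = i - Suc k" by simp
      show ?thesis using True unfolding P_def dd jj f ee using ik by (simp add: field_simps)
    qed simp
    show ?thesis
      using D unfolding B
      by (rule DERIV_cong) (simp add: P_def A[symmetric] algebra_simps)
  qed
  have "((\<lambda>s. - (\<Sum>k=0..i. d k * s^(i - k) / fact (i - k) * J k s)) has_real_derivative
           - (\<Sum>k=0..i. (if k < i then P (Suc k) else 0) - P k)) (at t)"
    by (intro DERIV_minus DERIV_sum summand) simp
  moreover have "- (\<Sum>k=0..i. (if k < i then P (Suc k) else 0) - P k) = P 0"
  proof (cases i)
    case 0 then show ?thesis by simp
  next
    case (Suc i')
    have "(\<Sum>k=0..i. P k) = P 0 + (\<Sum>k=0..i'. P (Suc k))"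
      unfolding Suc by (subst sum.atLeast0_atMost_Suc_shift) simp
    moreover have "(\<Sum>k=0..i. (if k < i then P (Suc k) else 0)) = (\<Sum>k=0..i'. P (Suc k))"
      unfolding Suc by (simp add: sum.atLeast0_atMost_Suc)
    ultimately show ?thesis by (simp add: sum_subtractf)
  qed
  moreover have "P 0 = t^i / fact i * jacobi_fun n \<alpha> \<beta> t"
  proof -
    have "G1 \<noteq> 0" unfolding G1_def using Gamma_nonzero[OF assms(5)] .
    then show ?thesis unfolding P_def DD_def G1_def by simp
  qed
  ultimately show "((\<lambda>s. - (\<Sum>k=0..i. 2^(k+1) * Gamma (real n + \<alpha> + \<beta> + 1) / Gamma (real n + real k + \<alpha> + \<beta> + 2)
              * s^(i - k) / fact (i - k)
              * jacobi_fun (n - 1 - k) (\<alpha> + 1 + real k) (\<beta> + 1 + real k) s))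
      has_real_derivative (t^i / fact i * jacobi_fun n \<alpha> \<beta> t)) (at t)"
    unfolding d_def J_def G1_def by simp
qed

end
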